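(* Let $X$ be a non-empty set, $A$ a non-empty subset of $X$, and $\alpha$ an equivalence relation on $X$ with equivalence classes $\{A_i:i\in I\}$. Then (i) $|E(\mathcal T_X(A))|=1$ if $|A|=1$; $=2^{|X|}$ if $X$ is infinite and $|A|\ge2$; and $=\sum_{\mu=1}^{|A|}\mu^{|X|-\mu}\binom{|A|}{\mu}$ otherwise; (ii) $|E(\mathcal T_X(\alpha))|=2^{\|\alpha\|}\prod_{i\in I}|A_i|$ if $X$ is infinite, and $=\sum_{\mu=1}^{\|\alpha\|}\mu^{\|\alpha\|-\mu}\sum_{J\subseteq I,\,|J|=\mu}\prod_{j\in J}|A_j|$ if $X$ is finite.
   Context: $\mathcal T_X(A)=\{f:X\to X\mid\operatorname{im}(f)\subseteq A\}$ and $\mathcal T_X(\alpha)=\{f:X\to X\mid\ker(f)\supseteq\alpha\}$, with $\ker(f)=\{(x,y):xf=yf\}$. $E(T)$ is the set of idempotents of $T$; $\|\alpha\|=|I|$ is the number of $\alpha$-classes; $\binom{n}{k}$ is the binomial coefficient. Cardinal arithmetic in infinite cases. *)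

theory Defs
  imports Main "HOL-Library.FuncSet" "HOL-Library.Equipollence"
begin

text \<open>Full transformations of X are represented as extensional functions in PiE X (\<lambda>_. X).\<close>

definition T_im :: "'a set \<Rightarrow> 'a set \<Rightarrow> ('a \<Rightarrow> 'a) set" where
  "T_im X A = {f \<in> X \<rightarrow>\<^sub>E X. f ` X \<subseteq> A}"

definition T_ker :: "'a set \<Rightarrow> ('a \<times> 'a) set \<Rightarrow> ('a \<Rightarrow> 'a) set" where
  "T_ker X \<alpha> = {f \<in> X \<rightarrow>\<^sub>E X. \<alpha> \<subseteq> {(x, y). x \<in> X \<and> y \<in> X \<and> f x = f y}}"

definition Idem :: "'a set \<Rightarrow> ('a \<Rightarrow> 'a) set \<Rightarrow> ('a \<Rightarrow> 'a) set" where
  "Idem X S = {f \<in> S. \<forall>x \<in> X. f (f x) = f x}"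

end

theory Submission
  imports Defs
begin


lemma eqpoll_Pow: "A \<approx> B \<Longrightarrow> Pow A \<approx> Pow B"
  unfolding eqpoll_def using bij_betw_Pow by blast

lemma times_self_eqpoll: "infinite A \<Longrightarrow> A \<times> A \<approx> A"
  using card_of_Times_same_infinite eqpoll_iff_card_of_ordIso by blast

lemma times_lepoll_infinite:
  assumes "infinite C" "A \<lesssim> C" "B \<lesssim> C" shows "A \<times> B \<lesssim> C"
proof -
  have "A \<times> B \<lesssim> C \<times> C" using assms times_lepoll_mono by blast
  then show ?thesis using times_self_eqpoll[OF assms(1)] lepoll_trans2 by blast
qed

lemma diff2_eqpoll: "infinite X \<Longrightarrow> X - {a,b} \<approx> X"
proof -
  assume inf: "infinite X"
  have inf2: "infinite (X - {a,b})" using inf by auto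
  have "insert a (insert b (X - {a,b})) \<approx> X - {a,b}"
    using inf2 infinite_insert_eqpoll eqpoll_trans
    by (metis finite_insert)
  moreover have "X \<lesssim> insert a (insert b (X - {a,b}))" by (rule subset_imp_lepoll) auto
  ultimately have "X \<lesssim> X - {a,b}" using eqpoll_imp_lepoll lepoll_trans by blast
  then show ?thesis using lepoll_antisym subset_imp_lepoll by (metis Diff_subset)
qed

lemma funcset_lepoll_Pow:
  assumes "infinite X" shows "(X \<rightarrow>\<^sub>E X) \<lesssim> Pow X"
proof -
  have "(X \<rightarrow>\<^sub>E X) \<lesssim> Pow (X \<times> X)"
    unfolding lepoll_def
  proof (intro exI conjI)
    show "inj_on (\<lambda>f. {(x, f x) | x. x \<in> X}) (X \<rightarrow>\<^sub>E X)"
    proof (rule inj_onI)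
      fix f g assume f: "f \<in> X \<rightarrow>\<^sub>E X" and g: "g \<in> X \<rightarrow>\<^sub>E X"
        and e: "{(x, f x) | x. x \<in> X} = {(x, g x) | x. x \<in> X}"
      show "f = g"
      proof (rule PiE_ext[OF f g])
        fix x assume "x \<in> X"
        then have "(x, f x) \<in> {(x, g x) | x. x \<in> X}" using e by blast
        then show "f x = g x" by auto
      qed
    qed
    show "(\<lambda>f. {(x, f x) | x. x \<in> X}) ` (X \<rightarrow>\<^sub>E X) \<subseteq> Pow (X \<times> X)" by auto
  qed
  also have "Pow (X \<times> X) \<approx> Pow X" by (rule eqpoll_Pow[OF times_self_eqpoll[OF assms]])
  finally show ?thesis .
qed



lemma Idem_im_iff: "f \<in> Idem X (T_im X A) \<longleftrightarrow> f \<in> X \<rightarrow>\<^sub>E X \<and> f ` X \<subseteq> A \<and> (\<forall>x\<in>X. f (f x) = f x)"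
  by (auto simp: Idem_def T_im_def)

lemma im_one:
  assumes "A = {a}" "A \<subseteq> X" shows "card (Idem X (T_im X A)) = 1"
proof -
  have "Idem X (T_im X A) = {restrict (\<lambda>x. a) X}"
  proof
    show "Idem X (T_im X A) \<subseteq> {restrict (\<lambda>x. a) X}"
    proof
      fix f assume "f \<in> Idem X (T_im X A)"
      then have f: "f \<in> X \<rightarrow>\<^sub>E X" "f ` X \<subseteq> {a}" using assms by (auto simp: Idem_im_iff)
      have "f = restrict (\<lambda>x. a) X"
        by (rule PiE_ext[OF f(1)]) (use f assms in auto)
      then show "f \<in> {restrict (\<lambda>x. a) X}" by simp
    qed
    show "{restrict (\<lambda>x. a) X} \<subseteq> Idem X (T_im X A)"
      using assms by (auto simp: Idem_im_iff)
  qed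
  then show ?thesis by simp
qed

definition SB :: "'a set \<Rightarrow> 'a set \<Rightarrow> 'a set \<Rightarrow> ('a \<Rightarrow> 'a) set" where
  "SB X A B = {f \<in> Idem X (T_im X A). f ` X = B}"

lemma SB_bij:
  assumes "B \<subseteq> A" "A \<subseteq> X"
  shows "bij_betw (\<lambda>f. restrict f (X - B)) (SB X A B) ((X - B) \<rightarrow>\<^sub>E B)"
proof (rule bij_betw_byWitness[where f' = "\<lambda>g. restrict (\<lambda>x. if x \<in> B then x else g x) X"])
  show "\<forall>f\<in>SB X A B. restrict (\<lambda>x. if x \<in> B then x else restrict f (X - B) x) X = f"
  proof
    fix f assume f: "f \<in> SB X A B"
    then have f1: "f \<in> X \<rightarrow>\<^sub>E X" "f ` X = B" "\<forall>x\<in>X. f (f x) = f x"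
      by (auto simp: SB_def Idem_im_iff)
    show "restrict (\<lambda>x. if x \<in> B then x else restrict f (X - B) x) X = f"
    proof (rule PiE_ext[OF _ f1(1)])
      show "restrict (\<lambda>x. if x \<in> B then x else restrict f (X - B) x) X \<in> X \<rightarrow>\<^sub>E X"
        using f1 assms by auto
      fix x assume x: "x \<in> X"
      show "restrict (\<lambda>x. if x \<in> B then x else restrict f (X - B) x) X x = f x"
      proof (cases "x \<in> B")
        case True
        then obtain y where "y \<in> X" "x = f y" using f1(2) by auto
        then show ?thesis using True x f1(3) by auto
      qed (use x in auto)
    qed
  qed
  show "\<forall>g\<in>(X - B) \<rightarrow>\<^sub>E B. restrict (restrict (\<lambda>x. if x \<in> B then x else g x) X) (X - B) = g"
    by (auto simp: PiE_def extensional_def fun_eq_iff)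
  show "(\<lambda>f. restrict f (X - B)) ` SB X A B \<subseteq> (X - B) \<rightarrow>\<^sub>E B"
    by (auto simp: SB_def Idem_im_iff)
  show "(\<lambda>g. restrict (\<lambda>x. if x \<in> B then x else g x) X) ` ((X - B) \<rightarrow>\<^sub>E B) \<subseteq> SB X A B"
  proof
    fix h assume "h \<in> (\<lambda>g. restrict (\<lambda>x. if x \<in> B then x else g x) X) ` ((X - B) \<rightarrow>\<^sub>E B)"
    then obtain g where g: "g \<in> (X - B) \<rightarrow>\<^sub>E B" and h: "h = restrict (\<lambda>x. if x \<in> B then x else g x) X"
      by auto
    have gB: "\<And>x. x \<in> X \<Longrightarrow> x \<notin> B \<Longrightarrow> g x \<in> B" using g by auto
    have gX: "\<And>x. x \<in> X \<Longrightarrow> x \<notin> B \<Longrightarrow> g x \<in> X" using gB assms by blast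
    have "h \<in> X \<rightarrow>\<^sub>E X" using h gX assms by auto
    moreover have "h ` X = B"
    proof
      show "h ` X \<subseteq> B" using h gB by auto
      show "B \<subseteq> h ` X"
      proof
        fix b assume "b \<in> B"
        then have "b \<in> X" "h b = b" using assms h by auto
        then show "b \<in> h ` X" by (metis image_eqI)
      qed
    qed
    moreover have "\<forall>x\<in>X. h (h x) = h x" using h gB gX assms by auto
    ultimately show "h \<in> SB X A B" using assms by (auto simp: SB_def Idem_im_iff)
  qed
qed

lemma card_SB:
  assumes "B \<subseteq> A" "A \<subseteq> X" "finite X"
  shows "card (SB X A B) = card B ^ (card X - card B)"
proof -
  have "card (SB X A B) = card ((X - B) \<rightarrow>\<^sub>E B)" using bij_betw_same_card[OF SB_bij[OF assms(1,2)]] .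
  also have "\<dots> = card B ^ card (X - B)" using assms by (simp add: card_funcsetE)
  also have "card (X - B) = card X - card B" using assms
    by (meson card_Diff_subset finite_subset order_trans)
  finally show ?thesis .
qed

lemma im_finite:
  assumes "X \<noteq> {}" "A \<subseteq> X" "finite X"
  shows "card (Idem X (T_im X A)) = (\<Sum>\<mu> = 1..card A. \<mu> ^ (card X - \<mu>) * (card A choose \<mu>))"
proof -
  have fA: "finite A" using assms(2,3) by (rule finite_subset)
  have cX: "card X \<ge> 1" using assms by (simp add: Suc_leI card_gt_0_iff)
  have U: "Idem X (T_im X A) = (\<Union>B\<in>Pow A. SB X A B)"
    by (auto simp: SB_def Idem_im_iff)
  have fin: "\<And>B. finite (SB X A B)"
  proof -
    fix B have "SB X A B \<subseteq> X \<rightarrow>\<^sub>E X" by (auto simp: SB_def Idem_im_iff)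
    then show "finite (SB X A B)" by (rule finite_subset) (use assms(3) in \<open>simp add: finite_PiE\<close>)
  qed
  have "card (Idem X (T_im X A)) = (\<Sum>B\<in>Pow A. card (SB X A B))"
    unfolding U
  proof (rule card_UN_disjoint)
    show "finite (Pow A)" using fA by simp
    show "\<forall>i\<in>Pow A. finite (SB X A i)" using fin by blast
    show "\<forall>i\<in>Pow A. \<forall>j\<in>Pow A. i \<noteq> j \<longrightarrow> SB X A i \<inter> SB X A j = {}"
      unfolding SB_def by blast
  qed
  also have "\<dots> = (\<Sum>B\<in>Pow A. card B ^ (card X - card B))"
    by (rule sum.cong) (simp_all add: card_SB[OF _ assms(2,3)])
  also have "\<dots> = (\<Sum>\<mu>\<in>{0..card A}. \<Sum>B\<in>{B. B \<in> Pow A \<and> card B = \<mu>}. card B ^ (card X - card B))"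
    by (rule sum.group[symmetric]) (use fA in \<open>auto intro: card_mono\<close>)
  also have "\<dots> = (\<Sum>\<mu>\<in>{0..card A}. \<mu> ^ (card X - \<mu>) * (card A choose \<mu>))"
  proof (rule sum.cong[OF refl])
    fix \<mu> assume "\<mu> \<in> {0..card A}"
    have "(\<Sum>B\<in>{B. B \<in> Pow A \<and> card B = \<mu>}. card B ^ (card X - card B))
        = (\<Sum>B\<in>{B. B \<subseteq> A \<and> card B = \<mu>}. \<mu> ^ (card X - \<mu>))"
      by (rule sum.cong) auto
    also have "\<dots> = \<mu> ^ (card X - \<mu>) * (card A choose \<mu>)"
      using n_subsets[OF fA] by simp
    finally show "(\<Sum>B\<in>{B. B \<in> Pow A \<and> card B = \<mu>}. card B ^ (card X - card B)) = \<mu> ^ (card X - \<mu>) * (card A choose \<mu>)" .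
  qed
  also have "\<dots> = (\<Sum>\<mu> = 1..card A. \<mu> ^ (card X - \<mu>) * (card A choose \<mu>))"
  proof -
    have "{0..card A} = insert 0 {1..card A}" by auto
    then show ?thesis using cX by simp
  qed
  finally show ?thesis .
qed

lemma im_infinite:
  assumes "infinite X" "A \<subseteq> X" "a \<in> A" "b \<in> A" "a \<noteq> b"
  shows "Idem X (T_im X A) \<approx> Pow X"
proof (rule lepoll_antisym)
  have "Idem X (T_im X A) \<subseteq> X \<rightarrow>\<^sub>E X" by (auto simp: Idem_im_iff)
  then show "Idem X (T_im X A) \<lesssim> Pow X"
    using funcset_lepoll_Pow[OF assms(1)] subset_imp_lepoll lepoll_trans by blast
  have "Pow X \<approx> Pow (X - {a,b})" using eqpoll_Pow[OF eqpoll_sym[OF diff2_eqpoll[OF assms(1)]]] .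
  also have "Pow (X - {a,b}) \<lesssim> Idem X (T_im X A)"
    unfolding lepoll_def
  proof (intro exI conjI)
    let ?F = "\<lambda>S. restrict (\<lambda>x. if x = a then a else if x = b then b else if x \<in> S then a else b) X"
    show "inj_on ?F (Pow (X - {a,b}))"
    proof (rule inj_onI)
      fix S T assume S: "S \<in> Pow (X - {a,b})" and T: "T \<in> Pow (X - {a,b})" and e: "?F S = ?F T"
      show "S = T"
      proof (rule set_eqI)
        fix x
        have "?F S x = ?F T x" using e by simp
        then show "x \<in> S \<longleftrightarrow> x \<in> T" using S T assms(5) by (auto split: if_splits)
      qed
    qed
    show "?F ` Pow (X - {a,b}) \<subseteq> Idem X (T_im X A)"
      using assms by (auto simp: Idem_im_iff)
  qed
  finally show "Pow X \<lesssim> Idem X (T_im X A)" .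
qed



lemma Idem_ker_iff:
  assumes "equiv X \<alpha>"
  shows "f \<in> Idem X (T_ker X \<alpha>) \<longleftrightarrow> f \<in> X \<rightarrow>\<^sub>E X \<and> (\<forall>x y. (x, y) \<in> \<alpha> \<longrightarrow> f x = f y) \<and> (\<forall>x\<in>X. f (f x) = f x)"
proof -
  have "\<alpha> \<subseteq> X \<times> X" using assms by (simp add: equiv_def refl_on_def)
  then show ?thesis by (auto simp: Idem_def T_ker_def)
qed

lemma cls_eq:
  assumes "equiv X \<alpha>" "i \<in> X // \<alpha>" "x \<in> i" shows "\<alpha> `` {x} = i"
proof -
  obtain y where y: "y \<in> X" "i = \<alpha> `` {y}" using assms(2) by (auto elim: quotientE)
  then have "(y, x) \<in> \<alpha>" using assms(3) by auto
  then show ?thesis using y assms(1) equiv_class_eq by metis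
qed

lemma cls_in: "equiv X \<alpha> \<Longrightarrow> x \<in> X \<Longrightarrow> \<alpha> `` {x} \<in> X // \<alpha>"
  by (rule quotientI)

lemma cls_self: "equiv X \<alpha> \<Longrightarrow> x \<in> X \<Longrightarrow> x \<in> \<alpha> `` {x}"
  by (rule equiv_class_self)

lemma cls_sub: "equiv X \<alpha> \<Longrightarrow> i \<in> X // \<alpha> \<Longrightarrow> i \<subseteq> X"
  using in_quotient_imp_subset by blast

lemma cls_ne: "equiv X \<alpha> \<Longrightarrow> i \<in> X // \<alpha> \<Longrightarrow> i \<noteq> {}"
  using in_quotient_imp_non_empty by blast

lemma rep_in: "equiv X \<alpha> \<Longrightarrow> i \<in> X // \<alpha> \<Longrightarrow> (SOME x. x \<in> i) \<in> i"
  using cls_ne by (metis ex_in_conv someI_ex)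

lemma cls_rel: "equiv X \<alpha> \<Longrightarrow> (x, y) \<in> \<alpha> \<Longrightarrow> \<alpha> `` {x} = \<alpha> `` {y}"
  using equiv_class_eq by metis

definition G :: "'a set \<Rightarrow> ('a \<times> 'a) set \<Rightarrow> ('a set \<Rightarrow> 'a) set" where
  "G X \<alpha> = {g \<in> (X // \<alpha>) \<rightarrow>\<^sub>E X. \<forall>i \<in> X // \<alpha>. g (\<alpha> `` {g i}) = g i}"

lemma ker_G_bij:
  assumes eq: "equiv X \<alpha>"
  shows "bij_betw (\<lambda>f. restrict (\<lambda>i. f (SOME x. x \<in> i)) (X // \<alpha>)) (Idem X (T_ker X \<alpha>)) (G X \<alpha>)"
proof (rule bij_betw_byWitness[where f' = "\<lambda>g. restrict (\<lambda>x. g (\<alpha> `` {x})) X"])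
  show "\<forall>f\<in>Idem X (T_ker X \<alpha>). restrict (\<lambda>x. restrict (\<lambda>i. f (SOME x. x \<in> i)) (X // \<alpha>) (\<alpha> `` {x})) X = f"
  proof
    fix f assume "f \<in> Idem X (T_ker X \<alpha>)"
    then have f: "f \<in> X \<rightarrow>\<^sub>E X" "\<And>x y. (x, y) \<in> \<alpha> \<Longrightarrow> f x = f y" using Idem_ker_iff[OF eq] by auto
    show "restrict (\<lambda>x. restrict (\<lambda>i. f (SOME x. x \<in> i)) (X // \<alpha>) (\<alpha> `` {x})) X = f"
    proof (rule PiE_ext[OF _ f(1)])
      show "restrict (\<lambda>x. restrict (\<lambda>i. f (SOME x. x \<in> i)) (X // \<alpha>) (\<alpha> `` {x})) X \<in> X \<rightarrow>\<^sub>E X"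
      proof -
        have "\<And>x. x \<in> X \<Longrightarrow> f (SOME y. y \<in> \<alpha> `` {x}) \<in> X"
          using rep_in[OF eq cls_in[OF eq]] cls_sub[OF eq cls_in[OF eq]] f(1) by blast
        then show ?thesis using cls_in[OF eq] by auto
      qed
      fix x assume x: "x \<in> X"
      have "(SOME y. y \<in> \<alpha> `` {x}) \<in> \<alpha> `` {x}" using rep_in[OF eq cls_in[OF eq x]] .
      then have "f (SOME y. y \<in> \<alpha> `` {x}) = f x" using f(2) by (metis Image_singleton_iff)
      then show "restrict (\<lambda>x. restrict (\<lambda>i. f (SOME x. x \<in> i)) (X // \<alpha>) (\<alpha> `` {x})) X x = f x"
        using x cls_in[OF eq x] by simp
    qed
  qed
  show "\<forall>g\<in>G X \<alpha>. restrict (\<lambda>i. restrict (\<lambda>x. g (\<alpha> `` {x})) X (SOME x. x \<in> i)) (X // \<alpha>) = g"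
  proof
    fix g assume g: "g \<in> G X \<alpha>"
    show "restrict (\<lambda>i. restrict (\<lambda>x. g (\<alpha> `` {x})) X (SOME x. x \<in> i)) (X // \<alpha>) = g"
    proof (rule ext)
      fix i show "restrict (\<lambda>i. restrict (\<lambda>x. g (\<alpha> `` {x})) X (SOME x. x \<in> i)) (X // \<alpha>) i = g i"
      proof (cases "i \<in> X // \<alpha>")
        case True
        have r: "(SOME x. x \<in> i) \<in> i" using rep_in[OF eq True] .
        then have "(SOME x. x \<in> i) \<in> X" using cls_sub[OF eq True] by blast
        then show ?thesis using True r cls_eq[OF eq True r] by simp
      next
        case False then show ?thesis using g by (auto simp: G_def PiE_def extensional_def)
      qed
    qed
  qed
  show "(\<lambda>f. restrict (\<lambda>i. f (SOME x. x \<in> i)) (X // \<alpha>)) ` Idem X (T_ker X \<alpha>) \<subseteq> G X \<alpha>"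
  proof
    fix h assume "h \<in> (\<lambda>f. restrict (\<lambda>i. f (SOME x. x \<in> i)) (X // \<alpha>)) ` Idem X (T_ker X \<alpha>)"
    then obtain f where fI: "f \<in> Idem X (T_ker X \<alpha>)" and h: "h = restrict (\<lambda>i. f (SOME x. x \<in> i)) (X // \<alpha>)" by blast
    then have f: "f \<in> X \<rightarrow>\<^sub>E X" "\<And>x y. (x, y) \<in> \<alpha> \<Longrightarrow> f x = f y" "\<And>x. x \<in> X \<Longrightarrow> f (f x) = f x"
      using Idem_ker_iff[OF eq] by auto
    have hX: "\<And>i. i \<in> X // \<alpha> \<Longrightarrow> h i \<in> X"
    proof -
      fix i assume i: "i \<in> X // \<alpha>"
      have "(SOME x. x \<in> i) \<in> X" using rep_in[OF eq i] cls_sub[OF eq i] by blast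
      then show "h i \<in> X" using h i f(1) by auto
    qed
    have "h \<in> (X // \<alpha>) \<rightarrow>\<^sub>E X" using hX h by auto
    moreover have "\<forall>i \<in> X // \<alpha>. h (\<alpha> `` {h i}) = h i"
    proof
      fix i assume i: "i \<in> X // \<alpha>"
      let ?j = "\<alpha> `` {h i}"
      have j: "?j \<in> X // \<alpha>" using cls_in[OF eq hX[OF i]] .
      have "(SOME x. x \<in> ?j) \<in> ?j" using rep_in[OF eq j] .
      then have "(h i, SOME x. x \<in> ?j) \<in> \<alpha>" by simp
      then have "f (SOME x. x \<in> ?j) = f (h i)" using f(2) by metis
      also have "f (h i) = f (f (SOME x. x \<in> i))" using h i by simp
      also have "\<dots> = f (SOME x. x \<in> i)" using f(3) rep_in[OF eq i] cls_sub[OF eq i] by blast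
      also have "\<dots> = h i" using h i by simp
      finally show "h ?j = h i" using h j by simp
    qed
    ultimately show "h \<in> G X \<alpha>" by (simp add: G_def)
  qed
  show "(\<lambda>g. restrict (\<lambda>x. g (\<alpha> `` {x})) X) ` G X \<alpha> \<subseteq> Idem X (T_ker X \<alpha>)"
  proof
    fix h assume "h \<in> (\<lambda>g. restrict (\<lambda>x. g (\<alpha> `` {x})) X) ` G X \<alpha>"
    then obtain g where g: "g \<in> G X \<alpha>" and h: "h = restrict (\<lambda>x. g (\<alpha> `` {x})) X" by blast
    have gX: "\<And>x. x \<in> X \<Longrightarrow> g (\<alpha> `` {x}) \<in> X" using g cls_in[OF eq] by (auto simp: G_def)
    have gG: "\<And>x. x \<in> X \<Longrightarrow> g (\<alpha> `` {g (\<alpha> `` {x})}) = g (\<alpha> `` {x})"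
      using g cls_in[OF eq] by (auto simp: G_def)
    have "h \<in> X \<rightarrow>\<^sub>E X" using h gX by auto
    moreover have "\<forall>x y. (x, y) \<in> \<alpha> \<longrightarrow> h x = h y"
    proof (intro allI impI)
      fix x y assume xy: "(x, y) \<in> \<alpha>"
      then have "x \<in> X" "y \<in> X" using eq by (auto simp: equiv_def refl_on_def)
      then show "h x = h y" using h cls_rel[OF eq xy] by simp
    qed
    moreover have "\<forall>x\<in>X. h (h x) = h x" using h gX gG by simp
    ultimately show "h \<in> Idem X (T_ker X \<alpha>)" using Idem_ker_iff[OF eq] by blast
  qed
qed



definition SJ :: "'a set \<Rightarrow> ('a \<times> 'a) set \<Rightarrow> 'a set set \<Rightarrow> ('a set \<Rightarrow> 'a) set" where
  "SJ X \<alpha> J = {g \<in> G X \<alpha>. (\<lambda>x. \<alpha> `` {x}) ` g ` (X // \<alpha>) = J}"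

lemma SJ_bij:
  assumes eq: "equiv X \<alpha>" and J: "J \<subseteq> X // \<alpha>"
  shows "bij_betw (\<lambda>g. (restrict g J, restrict (\<lambda>i. \<alpha> `` {g i}) (X // \<alpha> - J)))
           (SJ X \<alpha> J) ((\<Pi>\<^sub>E j\<in>J. j) \<times> ((X // \<alpha> - J) \<rightarrow>\<^sub>E J))"
proof (rule bij_betw_byWitness[where f' = "\<lambda>p. restrict (\<lambda>i. if i \<in> J then fst p i else fst p (snd p i)) (X // \<alpha>)"])
  show "\<forall>g\<in>SJ X \<alpha> J. restrict (\<lambda>i. if i \<in> J then fst (restrict g J, restrict (\<lambda>i. \<alpha> `` {g i}) (X // \<alpha> - J)) i
          else fst (restrict g J, restrict (\<lambda>i. \<alpha> `` {g i}) (X // \<alpha> - J)) (snd (restrict g J, restrict (\<lambda>i. \<alpha> `` {g i}) (X // \<alpha> - J)) i)) (X // \<alpha>) = g"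
  proof
    fix g assume g: "g \<in> SJ X \<alpha> J"
    then have gG: "g \<in> (X // \<alpha>) \<rightarrow>\<^sub>E X" "\<And>i. i \<in> X // \<alpha> \<Longrightarrow> g (\<alpha> `` {g i}) = g i"
      and gJ: "(\<lambda>x. \<alpha> `` {x}) ` g ` (X // \<alpha>) = J" by (auto simp: SJ_def G_def)
    show "restrict (\<lambda>i. if i \<in> J then fst (restrict g J, restrict (\<lambda>i. \<alpha> `` {g i}) (X // \<alpha> - J)) i
          else fst (restrict g J, restrict (\<lambda>i. \<alpha> `` {g i}) (X // \<alpha> - J)) (snd (restrict g J, restrict (\<lambda>i. \<alpha> `` {g i}) (X // \<alpha> - J)) i)) (X // \<alpha>) = g"
    proof (rule ext)
      fix i show "restrict (\<lambda>i. if i \<in> J then fst (restrict g J, restrict (\<lambda>i. \<alpha> `` {g i}) (X // \<alpha> - J)) i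
          else fst (restrict g J, restrict (\<lambda>i. \<alpha> `` {g i}) (X // \<alpha> - J)) (snd (restrict g J, restrict (\<lambda>i. \<alpha> `` {g i}) (X // \<alpha> - J)) i)) (X // \<alpha>) i = g i"
      proof (cases "i \<in> X // \<alpha>")
        case True
        have "\<alpha> `` {g i} \<in> J" using gJ True by blast
        then show ?thesis using True gG(2)[OF True] by simp
      next
        case False then show ?thesis using gG(1) by (auto simp: PiE_def extensional_def)
      qed
    qed
  qed
  show "\<forall>p\<in>(\<Pi>\<^sub>E j\<in>J. j) \<times> ((X // \<alpha> - J) \<rightarrow>\<^sub>E J).
          (\<lambda>g. (restrict g J, restrict (\<lambda>i. \<alpha> `` {g i}) (X // \<alpha> - J)))
            (restrict (\<lambda>i. if i \<in> J then fst p i else fst p (snd p i)) (X // \<alpha>)) = p"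
  proof
    fix p assume p: "p \<in> (\<Pi>\<^sub>E j\<in>J. j) \<times> ((X // \<alpha> - J) \<rightarrow>\<^sub>E J)"
    obtain c k where ck: "p = (c, k)" by (cases p)
    have c: "c \<in> (\<Pi>\<^sub>E j\<in>J. j)" and k: "k \<in> (X // \<alpha> - J) \<rightarrow>\<^sub>E J" using p ck by auto
    have c1: "restrict (restrict (\<lambda>i. if i \<in> J then c i else c (k i)) (X // \<alpha>)) J = c"
    proof (rule ext)
      fix j show "restrict (restrict (\<lambda>i. if i \<in> J then c i else c (k i)) (X // \<alpha>)) J j = c j"
        using c J by (cases "j \<in> J") (auto simp: PiE_def extensional_def)
    qed
    have k1: "restrict (\<lambda>i. \<alpha> `` {restrict (\<lambda>i. if i \<in> J then c i else c (k i)) (X // \<alpha>) i}) (X // \<alpha> - J) = k"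
    proof (rule ext)
      fix i show "restrict (\<lambda>i. \<alpha> `` {restrict (\<lambda>i. if i \<in> J then c i else c (k i)) (X // \<alpha>) i}) (X // \<alpha> - J) i = k i"
      proof (cases "i \<in> X // \<alpha> - J")
        case True
        then have ki: "k i \<in> J" using k by auto
        then have "c (k i) \<in> k i" using c by auto
        then have "\<alpha> `` {c (k i)} = k i" using cls_eq[OF eq] ki J by blast
        then show ?thesis using True by simp
      next
        case False then show ?thesis using k by (auto simp: PiE_def extensional_def)
      qed
    qed
    show "(\<lambda>g. (restrict g J, restrict (\<lambda>i. \<alpha> `` {g i}) (X // \<alpha> - J)))
            (restrict (\<lambda>i. if i \<in> J then fst p i else fst p (snd p i)) (X // \<alpha>)) = p"
      using c1 k1 unfolding ck fst_conv snd_conv by metis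
  qed
  show "(\<lambda>g. (restrict g J, restrict (\<lambda>i. \<alpha> `` {g i}) (X // \<alpha> - J))) ` SJ X \<alpha> J
        \<subseteq> (\<Pi>\<^sub>E j\<in>J. j) \<times> ((X // \<alpha> - J) \<rightarrow>\<^sub>E J)"
  proof
    fix q assume "q \<in> (\<lambda>g. (restrict g J, restrict (\<lambda>i. \<alpha> `` {g i}) (X // \<alpha> - J))) ` SJ X \<alpha> J"
    then obtain g where g: "g \<in> SJ X \<alpha> J" and q: "q = (restrict g J, restrict (\<lambda>i. \<alpha> `` {g i}) (X // \<alpha> - J))" by blast
    then have gG: "g \<in> (X // \<alpha>) \<rightarrow>\<^sub>E X" "\<And>i. i \<in> X // \<alpha> \<Longrightarrow> g (\<alpha> `` {g i}) = g i"
      and gJ: "(\<lambda>x. \<alpha> `` {x}) ` g ` (X // \<alpha>) = J" by (auto simp: SJ_def G_def)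
    have "\<And>j. j \<in> J \<Longrightarrow> g j \<in> j"
    proof -
      fix j assume "j \<in> J"
      then obtain i where i: "i \<in> X // \<alpha>" "j = \<alpha> `` {g i}" using gJ by blast
      have giX: "g i \<in> X" using gG(1) i(1) by auto
      have "g j = g i" using i gG(2) by simp
      then show "g j \<in> j" using i(2) cls_self[OF eq giX] by simp
    qed
    moreover have "\<And>i. i \<in> X // \<alpha> - J \<Longrightarrow> \<alpha> `` {g i} \<in> J" using gJ by blast
    ultimately show "q \<in> (\<Pi>\<^sub>E j\<in>J. j) \<times> ((X // \<alpha> - J) \<rightarrow>\<^sub>E J)" using q by auto
  qed
  show "(\<lambda>p. restrict (\<lambda>i. if i \<in> J then fst p i else fst p (snd p i)) (X // \<alpha>)) ` ((\<Pi>\<^sub>E j\<in>J. j) \<times> ((X // \<alpha> - J) \<rightarrow>\<^sub>E J))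
        \<subseteq> SJ X \<alpha> J"
  proof
    fix g assume "g \<in> (\<lambda>p. restrict (\<lambda>i. if i \<in> J then fst p i else fst p (snd p i)) (X // \<alpha>)) ` ((\<Pi>\<^sub>E j\<in>J. j) \<times> ((X // \<alpha> - J) \<rightarrow>\<^sub>E J))"
    then obtain p where p: "p \<in> (\<Pi>\<^sub>E j\<in>J. j) \<times> ((X // \<alpha> - J) \<rightarrow>\<^sub>E J)"
      and g0: "g = restrict (\<lambda>i. if i \<in> J then fst p i else fst p (snd p i)) (X // \<alpha>)" by blast
    obtain c k where ck: "p = (c, k)" by (cases p)
    have c: "c \<in> (\<Pi>\<^sub>E j\<in>J. j)" and k: "k \<in> (X // \<alpha> - J) \<rightarrow>\<^sub>E J" using p ck by auto
    have g: "g = restrict (\<lambda>i. if i \<in> J then c i else c (k i)) (X // \<alpha>)"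
      using g0 unfolding ck fst_conv snd_conv .
    have ccls: "\<And>j. j \<in> J \<Longrightarrow> \<alpha> `` {c j} = j" using c J cls_eq[OF eq] by blast
    have cX: "\<And>j. j \<in> J \<Longrightarrow> c j \<in> X" using c J cls_sub[OF eq] by blast
    have kJ: "\<And>i. i \<in> X // \<alpha> \<Longrightarrow> i \<notin> J \<Longrightarrow> k i \<in> J" using k by auto
    have gv: "\<And>i. i \<in> X // \<alpha> \<Longrightarrow> \<exists>j\<in>J. g i = c j \<and> \<alpha> `` {g i} = j"
    proof -
      fix i assume i: "i \<in> X // \<alpha>"
      show "\<exists>j\<in>J. g i = c j \<and> \<alpha> `` {g i} = j"
      proof (cases "i \<in> J")
        case True then show ?thesis using g i ccls by auto
      next
        case False then show ?thesis using g i ccls kJ[OF i] by auto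
      qed
    qed
    have "g \<in> (X // \<alpha>) \<rightarrow>\<^sub>E X" using g cX kJ by auto
    moreover have "\<forall>i \<in> X // \<alpha>. g (\<alpha> `` {g i}) = g i"
    proof
      fix i assume i: "i \<in> X // \<alpha>"
      then obtain j where j: "j \<in> J" "g i = c j" "\<alpha> `` {g i} = j" using gv by blast
      then show "g (\<alpha> `` {g i}) = g i" using g J by auto
    qed
    moreover have "(\<lambda>x. \<alpha> `` {x}) ` g ` (X // \<alpha>) = J"
    proof
      show "(\<lambda>x. \<alpha> `` {x}) ` g ` (X // \<alpha>) \<subseteq> J" using gv by blast
      show "J \<subseteq> (\<lambda>x. \<alpha> `` {x}) ` g ` (X // \<alpha>)"
      proof
        fix j assume j: "j \<in> J"
        then have "g j = c j" "j \<in> X // \<alpha>" using g J by auto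
        then have "\<alpha> `` {g j} = j" using ccls j by simp
        then show "j \<in> (\<lambda>x. \<alpha> `` {x}) ` g ` (X // \<alpha>)" using \<open>j \<in> X // \<alpha>\<close> by (metis image_eqI)
      qed
    qed
    ultimately show "g \<in> SJ X \<alpha> J" by (simp add: SJ_def G_def)
  qed
qed

lemma card_SJ:
  assumes eq: "equiv X \<alpha>" and J: "J \<subseteq> X // \<alpha>" and fin: "finite X"
  shows "card (SJ X \<alpha> J) = (\<Prod>j\<in>J. card j) * card J ^ (card (X // \<alpha>) - card J)"
proof -
  have fI: "finite (X // \<alpha>)" using fin by (rule finite_quotient[OF _ equiv_type[OF eq]])
  have fJ: "finite J" using fI J finite_subset by blast
  have "card (SJ X \<alpha> J) = card ((\<Pi>\<^sub>E j\<in>J. j) \<times> ((X // \<alpha> - J) \<rightarrow>\<^sub>E J))"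
    using bij_betw_same_card[OF SJ_bij[OF eq J]] .
  also have "\<dots> = (\<Prod>j\<in>J. card j) * card J ^ card (X // \<alpha> - J)"
    using fI fJ by (simp add: card_cartesian_product card_PiE card_funcsetE)
  also have "card (X // \<alpha> - J) = card (X // \<alpha>) - card J" using J fJ by (simp add: card_Diff_subset)
  finally show ?thesis .
qed

lemma ker_finite:
  assumes eq: "equiv X \<alpha>" and ne: "X \<noteq> {}" and fin: "finite X"
  shows "card (Idem X (T_ker X \<alpha>)) = (\<Sum>\<mu> = 1..card (X // \<alpha>).
               \<mu> ^ (card (X // \<alpha>) - \<mu>) *
               (\<Sum>J \<in> {J. J \<subseteq> X // \<alpha> \<and> card J = \<mu>}. \<Prod>j \<in> J. card j))"
proof -
  let ?I = "X // \<alpha>"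
  let ?n = "card ?I"
  have fI: "finite ?I" using fin by (rule finite_quotient[OF _ equiv_type[OF eq]])
  have Ine: "?I \<noteq> {}" using ne by simp
  have n1: "?n \<ge> 1" using fI Ine by (simp add: Suc_leI card_gt_0_iff)
  have GU: "G X \<alpha> = (\<Union>J\<in>Pow ?I. SJ X \<alpha> J)"
  proof
    show "G X \<alpha> \<subseteq> (\<Union>J\<in>Pow ?I. SJ X \<alpha> J)"
    proof
      fix g assume g: "g \<in> G X \<alpha>"
      then have "\<And>i. i \<in> ?I \<Longrightarrow> \<alpha> `` {g i} \<in> ?I" using cls_in[OF eq] by (auto simp: G_def)
      then have "(\<lambda>x. \<alpha> `` {x}) ` g ` ?I \<in> Pow ?I" by blast
      then show "g \<in> (\<Union>J\<in>Pow ?I. SJ X \<alpha> J)" using g by (auto simp: SJ_def)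
    qed
    show "(\<Union>J\<in>Pow ?I. SJ X \<alpha> J) \<subseteq> G X \<alpha>" by (auto simp: SJ_def)
  qed
  have finS: "\<And>J. finite (SJ X \<alpha> J)"
  proof -
    fix J have "SJ X \<alpha> J \<subseteq> ?I \<rightarrow>\<^sub>E X" by (auto simp: SJ_def G_def)
    then show "finite (SJ X \<alpha> J)" by (rule finite_subset) (use fI fin in \<open>simp add: finite_PiE\<close>)
  qed
  have "card (Idem X (T_ker X \<alpha>)) = card (G X \<alpha>)" using bij_betw_same_card[OF ker_G_bij[OF eq]] .
  also have "\<dots> = (\<Sum>J\<in>Pow ?I. card (SJ X \<alpha> J))"
    unfolding GU
  proof (rule card_UN_disjoint)
    show "finite (Pow ?I)" using fI by simp
    show "\<forall>i\<in>Pow ?I. finite (SJ X \<alpha> i)" using finS by blast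
    show "\<forall>i\<in>Pow ?I. \<forall>j\<in>Pow ?I. i \<noteq> j \<longrightarrow> SJ X \<alpha> i \<inter> SJ X \<alpha> j = {}"
      unfolding SJ_def by blast
  qed
  also have "\<dots> = (\<Sum>J\<in>Pow ?I. (\<Prod>j\<in>J. card j) * card J ^ (?n - card J))"
    by (rule sum.cong) (simp_all add: card_SJ[OF eq _ fin])
  also have "\<dots> = (\<Sum>\<mu>\<in>{0..?n}. \<Sum>J\<in>{J. J \<in> Pow ?I \<and> card J = \<mu>}. (\<Prod>j\<in>J. card j) * card J ^ (?n - card J))"
    by (rule sum.group[symmetric]) (use fI in \<open>auto intro: card_mono\<close>)
  also have "\<dots> = (\<Sum>\<mu>\<in>{0..?n}. \<mu> ^ (?n - \<mu>) * (\<Sum>J \<in> {J. J \<subseteq> ?I \<and> card J = \<mu>}. \<Prod>j \<in> J. card j))"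
  proof (rule sum.cong[OF refl])
    fix \<mu> assume "\<mu> \<in> {0..?n}"
    have "(\<Sum>J\<in>{J. J \<in> Pow ?I \<and> card J = \<mu>}. (\<Prod>j\<in>J. card j) * card J ^ (?n - card J))
        = (\<Sum>J\<in>{J. J \<subseteq> ?I \<and> card J = \<mu>}. \<mu> ^ (?n - \<mu>) * (\<Prod>j\<in>J. card j))"
      by (rule sum.cong) auto
    also have "\<dots> = \<mu> ^ (?n - \<mu>) * (\<Sum>J \<in> {J. J \<subseteq> ?I \<and> card J = \<mu>}. \<Prod>j \<in> J. card j)"
      by (simp add: sum_distrib_left)
    finally show "(\<Sum>J\<in>{J. J \<in> Pow ?I \<and> card J = \<mu>}. (\<Prod>j\<in>J. card j) * card J ^ (?n - card J))
        = \<mu> ^ (?n - \<mu>) * (\<Sum>J \<in> {J. J \<subseteq> ?I \<and> card J = \<mu>}. \<Prod>j \<in> J. card j)" .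
  qed
  also have "\<dots> = (\<Sum>\<mu> = 1..?n. \<mu> ^ (?n - \<mu>) * (\<Sum>J \<in> {J. J \<subseteq> ?I \<and> card J = \<mu>}. \<Prod>j \<in> J. card j))"
  proof -
    have "{0..?n} = insert 0 {1..?n}" by auto
    then show ?thesis using n1 by simp
  qed
  finally show ?thesis .
qed



lemma PiE_sub_G:
  assumes eq: "equiv X \<alpha>" shows "(\<Pi>\<^sub>E i\<in>X // \<alpha>. i) \<subseteq> G X \<alpha>"
proof
  fix c assume c: "c \<in> (\<Pi>\<^sub>E i\<in>X // \<alpha>. i)"
  have "c \<in> (X // \<alpha>) \<rightarrow>\<^sub>E X" using c cls_sub[OF eq] by auto
  moreover have "\<forall>i\<in>X // \<alpha>. c (\<alpha> `` {c i}) = c i"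
  proof
    fix i assume i: "i \<in> X // \<alpha>"
    then have "c i \<in> i" using c by auto
    then show "c (\<alpha> `` {c i}) = c i" using cls_eq[OF eq i] by simp
  qed
  ultimately show "c \<in> G X \<alpha>" by (simp add: G_def)
qed

lemma G_upper:
  assumes eq: "equiv X \<alpha>" and c0: "c0 \<in> (\<Pi>\<^sub>E i\<in>X // \<alpha>. i)"
  shows "G X \<alpha> \<lesssim> (X // \<alpha> \<rightarrow>\<^sub>E X // \<alpha>) \<times> (\<Pi>\<^sub>E i\<in>X // \<alpha>. i)"
  unfolding lepoll_def
proof (intro exI conjI)
  let ?I = "X // \<alpha>"
  let ?F = "\<lambda>g. (restrict (\<lambda>i. \<alpha> `` {g i}) ?I,
                  restrict (\<lambda>j. if j \<in> (\<lambda>x. \<alpha> `` {x}) ` g ` ?I then g j else c0 j) ?I)"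
  show "inj_on ?F (G X \<alpha>)"
  proof (rule inj_onI)
    fix g g' assume g: "g \<in> G X \<alpha>" and g': "g' \<in> G X \<alpha>" and e: "?F g = ?F g'"
    have gG: "g \<in> ?I \<rightarrow>\<^sub>E X" "\<And>i. i \<in> ?I \<Longrightarrow> g (\<alpha> `` {g i}) = g i" using g by (auto simp: G_def)
    have g'G: "g' \<in> ?I \<rightarrow>\<^sub>E X" "\<And>i. i \<in> ?I \<Longrightarrow> g' (\<alpha> `` {g' i}) = g' i" using g' by (auto simp: G_def)
    show "g = g'"
    proof (rule PiE_ext[OF gG(1) g'G(1)])
      fix i assume i: "i \<in> ?I"
      have "fst (?F g) i = fst (?F g') i" using e by (rule arg_cong[where f="\<lambda>p. fst p i"])
      then have c: "\<alpha> `` {g i} = \<alpha> `` {g' i}" by (simp only: fst_conv restrict_apply'[OF i])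
      let ?j = "\<alpha> `` {g i}"
      have giX: "g i \<in> X" using PiE_mem[OF gG(1) i] .
      have j: "?j \<in> ?I" using cls_in[OF eq giX] .
      have j1: "?j \<in> (\<lambda>x. \<alpha> `` {x}) ` g ` ?I" by (rule image_eqI[OF refl imageI[OF i]])
      have j2: "?j \<in> (\<lambda>x. \<alpha> `` {x}) ` g' ` ?I" unfolding c by (rule image_eqI[OF refl imageI[OF i]])
      have "snd (?F g) ?j = snd (?F g') ?j" using e by (rule arg_cong[where f="\<lambda>p. snd p ?j"])
      then have "g ?j = g' ?j" by (simp only: snd_conv restrict_apply'[OF j] if_P[OF j1] if_P[OF j2])
      then show "g i = g' i" using gG(2)[OF i] g'G(2)[OF i] c by metis
    qed
  qed
  show "?F ` G X \<alpha> \<subseteq> (?I \<rightarrow>\<^sub>E ?I) \<times> (\<Pi>\<^sub>E i\<in>?I. i)"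
  proof
    fix q assume "q \<in> ?F ` G X \<alpha>"
    then obtain g where g: "g \<in> G X \<alpha>" and q: "q = ?F g" by blast
    have gG: "g \<in> ?I \<rightarrow>\<^sub>E X" "\<And>i. i \<in> ?I \<Longrightarrow> g (\<alpha> `` {g i}) = g i" using g by (auto simp: G_def)
    have 1: "restrict (\<lambda>i. \<alpha> `` {g i}) ?I \<in> ?I \<rightarrow>\<^sub>E ?I" using gG(1) cls_in[OF eq] by auto
    have "\<And>j. j \<in> ?I \<Longrightarrow> (if j \<in> (\<lambda>x. \<alpha> `` {x}) ` g ` ?I then g j else c0 j) \<in> j"
    proof -
      fix j assume j: "j \<in> ?I"
      show "(if j \<in> (\<lambda>x. \<alpha> `` {x}) ` g ` ?I then g j else c0 j) \<in> j"
      proof (cases "j \<in> (\<lambda>x. \<alpha> `` {x}) ` g ` ?I")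
        case True
        then obtain i where i: "i \<in> ?I" "j = \<alpha> `` {g i}" by blast
        have "g i \<in> X" using gG(1) i(1) by auto
        then have "g i \<in> j" using i(2) cls_self[OF eq] by simp
        then show ?thesis using True i gG(2) by simp
      next
        case False then show ?thesis using c0 j by auto
      qed
    qed
    then have 2: "restrict (\<lambda>j. if j \<in> (\<lambda>x. \<alpha> `` {x}) ` g ` ?I then g j else c0 j) ?I \<in> (\<Pi>\<^sub>E i\<in>?I. i)"
      by auto
    show "q \<in> (?I \<rightarrow>\<^sub>E ?I) \<times> (\<Pi>\<^sub>E i\<in>?I. i)" using 1 2 q by simp
  qed
qed

lemma Pow_lower:
  assumes eq: "equiv X \<alpha>" and c0: "c0 \<in> (\<Pi>\<^sub>E i\<in>X // \<alpha>. i)" and inf: "infinite (X // \<alpha>)"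
  shows "Pow (X // \<alpha>) \<lesssim> G X \<alpha>"
proof -
  let ?I = "X // \<alpha>"
  obtain i0 where i0: "i0 \<in> ?I" using inf by (metis finite.emptyI ex_in_conv)
  obtain i1 where i1: "i1 \<in> ?I - {i0}" using inf by (metis finite.emptyI ex_in_conv finite_insert insert_Diff_single)
  have ne: "i0 \<noteq> i1" using i1 by auto
  have cc: "\<And>i. i \<in> ?I \<Longrightarrow> \<alpha> `` {c0 i} = i" using c0 cls_eq[OF eq] by auto
  have cX: "\<And>i. i \<in> ?I \<Longrightarrow> c0 i \<in> X" using c0 cls_sub[OF eq] by auto
  have d: "c0 i0 \<noteq> c0 i1" using cc i0 i1 ne by (metis DiffD1)
  have "Pow ?I \<approx> Pow (?I - {i0, i1})" using eqpoll_Pow[OF eqpoll_sym[OF diff2_eqpoll[OF inf]]] .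
  also have "Pow (?I - {i0, i1}) \<lesssim> G X \<alpha>"
    unfolding lepoll_def
  proof (intro exI conjI)
    let ?F = "\<lambda>S. restrict (\<lambda>i. c0 (if i = i0 then i0 else if i = i1 then i1 else if i \<in> S then i0 else i1)) ?I"
    show "inj_on ?F (Pow (?I - {i0, i1}))"
    proof (rule inj_onI)
      fix S T assume S: "S \<in> Pow (?I - {i0, i1})" and T: "T \<in> Pow (?I - {i0, i1})" and e: "?F S = ?F T"
      show "S = T"
      proof (rule set_eqI)
        fix x
        have "?F S x = ?F T x" using e by simp
        then show "x \<in> S \<longleftrightarrow> x \<in> T" using S T d by (auto split: if_splits)
      qed
    qed
    show "?F ` Pow (?I - {i0, i1}) \<subseteq> G X \<alpha>"
    proof
      fix g assume "g \<in> ?F ` Pow (?I - {i0, i1})"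
      then obtain S where g: "g = ?F S" by blast
      have gv: "\<And>i. i \<in> ?I \<Longrightarrow> g i = c0 i0 \<or> g i = c0 i1" using g by auto
      have "g \<in> ?I \<rightarrow>\<^sub>E X" using g cX i0 i1 by auto
      moreover have "\<forall>i\<in>?I. g (\<alpha> `` {g i}) = g i"
      proof
        fix i assume i: "i \<in> ?I"
        show "g (\<alpha> `` {g i}) = g i"
        proof (cases "g i = c0 i0")
          case True then show ?thesis using cc[OF i0] g i0 by simp
        next
          case False then have "g i = c0 i1" using gv[OF i] by blast
          then show ?thesis using cc i1 g ne by auto
        qed
      qed
      ultimately show "g \<in> G X \<alpha>" by (simp add: G_def)
    qed
  qed
  finally show ?thesis .
qed

lemma ker_infinite:
  assumes eq: "equiv X \<alpha>" and inf: "infinite X"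
  shows "Idem X (T_ker X \<alpha>) \<approx> Pow (X // \<alpha>) \<times> (\<Pi>\<^sub>E i \<in> X // \<alpha>. i)"
proof -
  let ?I = "X // \<alpha>"
  let ?P = "\<Pi>\<^sub>E i \<in> ?I. i"
  have "?P \<noteq> {}" using cls_ne[OF eq] by (simp add: PiE_eq_empty_iff)
  then obtain c0 where c0: "c0 \<in> ?P" by blast
  have PG: "?P \<lesssim> G X \<alpha>" using PiE_sub_G[OF eq] by (rule subset_imp_lepoll)
  have "G X \<alpha> \<approx> ?P \<times> Pow ?I \<or> G X \<alpha> \<approx> Pow ?I \<times> ?P"
  proof (cases "finite ?I")
    case True
    have "\<exists>j\<in>?I. infinite j"
    proof (rule ccontr)
      assume "\<not> (\<exists>j\<in>?I. infinite j)"
      then have "finite (\<Union> ?I)" using True by blast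
      then show False using inf Union_quotient[OF eq] by simp
    qed
    then obtain j0 where j0: "j0 \<in> ?I" "infinite j0" by blast
    have "j0 \<lesssim> ?P"
      unfolding lepoll_def
    proof (intro exI conjI)
      show "inj_on (\<lambda>x. c0(j0 := x)) j0" by (rule inj_onI) (metis fun_upd_same)
      show "(\<lambda>x. c0(j0 := x)) ` j0 \<subseteq> ?P"
      proof
        fix f assume "f \<in> (\<lambda>x. c0(j0 := x)) ` j0"
        then obtain x where x: "x \<in> j0" "f = c0(j0 := x)" by blast
        have "c0(j0 := x) \<in> Pi\<^sub>E (insert j0 ?I) (\<lambda>i. i)" using PiE_fun_upd[OF x(1) c0] .
        then show "f \<in> ?P" using x j0 by (simp add: insert_absorb)
      qed
    qed
    then have Pinf: "infinite ?P" using j0(2) by (metis infinite_le_lepoll lepoll_trans)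
    have Ginf: "infinite (G X \<alpha>)" using Pinf PiE_sub_G[OF eq] finite_subset by blast
    have "G X \<alpha> \<lesssim> Pow ?I \<times> ?P"
    proof -
      have "G X \<alpha> \<lesssim> (?I \<rightarrow>\<^sub>E ?I) \<times> ?P" by (rule G_upper[OF eq c0])
      also have "(?I \<rightarrow>\<^sub>E ?I) \<times> ?P \<lesssim> ?P"
        by (rule times_lepoll_infinite[OF Pinf])
           (use True in \<open>simp_all add: finite_lepoll_infinite[OF Pinf] finite_PiE\<close>)
      also have "?P \<lesssim> Pow ?I \<times> ?P"
        unfolding lepoll_def by (rule exI[of _ "\<lambda>x. ({}, x)"]) (auto simp: inj_on_def)
      finally show ?thesis .
    qed
    moreover have "Pow ?I \<times> ?P \<lesssim> G X \<alpha>"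
      by (rule times_lepoll_infinite[OF Ginf _ PG]) (use True Ginf in \<open>simp add: finite_lepoll_infinite\<close>)
    ultimately show ?thesis using lepoll_antisym by blast
  next
    case False
    have PowG: "Pow ?I \<lesssim> G X \<alpha>" by (rule Pow_lower[OF eq c0 False])
    have Ginf: "infinite (G X \<alpha>)"
    proof
      assume "finite (G X \<alpha>)"
      moreover have "(UNIV::nat set) \<lesssim> Pow ?I" using False infinite_le_lepoll by (metis finite_Pow_iff)
      ultimately show False using PowG infinite_le_lepoll lepoll_trans by metis
    qed
    have "G X \<alpha> \<lesssim> Pow ?I \<times> ?P"
    proof -
      have "G X \<alpha> \<lesssim> (?I \<rightarrow>\<^sub>E ?I) \<times> ?P" by (rule G_upper[OF eq c0])
      also have "(?I \<rightarrow>\<^sub>E ?I) \<times> ?P \<lesssim> Pow ?I \<times> ?P"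
        by (rule times_lepoll_mono[OF funcset_lepoll_Pow[OF False] lepoll_refl])
      finally show ?thesis .
    qed
    moreover have "Pow ?I \<times> ?P \<lesssim> G X \<alpha>" by (rule times_lepoll_infinite[OF Ginf PowG PG])
    ultimately show ?thesis using lepoll_antisym by blast
  qed
  then have "G X \<alpha> \<approx> Pow ?I \<times> ?P" using times_commute_eqpoll eqpoll_trans by blast
  moreover have "Idem X (T_ker X \<alpha>) \<approx> G X \<alpha>" using ker_G_bij[OF eq] eqpoll_def by blast
  ultimately show ?thesis using eqpoll_trans by blast
qed


theorem proposition5p30:
  fixes X A :: "'a set" and \<alpha> :: "('a \<times> 'a) set"
  assumes "X \<noteq> {}" and "A \<noteq> {}" and "A \<subseteq> X" and "equiv X \<alpha>"
  shows "(card A = 1 \<longrightarrow> card (Idem X (T_im X A)) = 1)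
       \<and> (infinite X \<and> card A \<noteq> 1 \<longrightarrow> Idem X (T_im X A) \<approx> Pow X)
       \<and> (finite X \<and> card A \<noteq> 1 \<longrightarrow>
            card (Idem X (T_im X A)) = (\<Sum>\<mu> = 1..card A. \<mu> ^ (card X - \<mu>) * (card A choose \<mu>)))
       \<and> (infinite X \<longrightarrow> Idem X (T_ker X \<alpha>) \<approx> Pow (X // \<alpha>) \<times> (\<Pi>\<^sub>E i \<in> X // \<alpha>. i))
       \<and> (finite X \<longrightarrow>
            card (Idem X (T_ker X \<alpha>)) = (\<Sum>\<mu> = 1..card (X // \<alpha>).
               \<mu> ^ (card (X // \<alpha>) - \<mu>) *
               (\<Sum>J \<in> {J. J \<subseteq> X // \<alpha> \<and> card J = \<mu>}. \<Prod>j \<in> J. card j)))"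
proof (intro conjI impI)
  assume "card A = 1"
  then obtain a where "A = {a}" by (rule card_1_singletonE)
  then show "card (Idem X (T_im X A)) = 1" by (rule im_one[OF _ assms(3)])
next
  assume h: "infinite X \<and> card A \<noteq> 1"
  obtain a where a: "a \<in> A" using assms(2) by blast
  have "\<exists>b\<in>A. b \<noteq> a"
  proof (rule ccontr)
    assume "\<not> (\<exists>b\<in>A. b \<noteq> a)"
    then have "A = {a}" using a by blast
    then show False using h by simp
  qed
  then obtain b where b: "b \<in> A" "b \<noteq> a" by blast
  have infX: "infinite X" using h by blast
  show "Idem X (T_im X A) \<approx> Pow X" by (rule im_infinite[OF infX assms(3) a b(1)]) (use b(2) in simp)
next
  assume "finite X \<and> card A \<noteq> 1"
  then show "card (Idem X (T_im X A)) = (\<Sum>\<mu> = 1..card A. \<mu> ^ (card X - \<mu>) * (card A choose \<mu>))"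
    using im_finite[OF assms(1,3)] by blast
next
  assume "infinite X"
  then show "Idem X (T_ker X \<alpha>) \<approx> Pow (X // \<alpha>) \<times> (\<Pi>\<^sub>E i \<in> X // \<alpha>. i)"
    using ker_infinite[OF assms(4)] by blast
next
  assume "finite X"
  then show "card (Idem X (T_ker X \<alpha>)) = (\<Sum>\<mu> = 1..card (X // \<alpha>).
               \<mu> ^ (card (X // \<alpha>) - \<mu>) *
               (\<Sum>J \<in> {J. J \<subseteq> X // \<alpha> \<and> card J = \<mu>}. \<Prod>j \<in> J. card j))"
    using ker_finite[OF assms(4,1)] by blast
qed

end
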